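(* Let $\alpha\in\mathcal{P}(n)$ with $\delta(\alpha)=\big(1,2,\dots,q,q^{(s_q)},(q-1)^{(s_{q-1})},\dots,1^{(s_1)}\big)$, where $q\ge1$, $s_1,\dots,s_q\ge0$. Let $\overline{\alpha}=(\overline{\alpha}_1,\dots,\overline{\alpha}_q)$ with $\overline{\alpha}_i=q-i+1+\sum_{k=i}^q s_k$ and $\underline{\alpha}=\overline{\alpha}^*$. Then the multiset of (nonzero) entries of $\delta(\overline{\alpha})=\delta(\underline{\alpha})$ is equal to the multiset of parts of $\underline{\alpha}$.
   Context: A partition of a positive integer $n$ is a finite non-increasing sequence $\alpha=(\alpha_1,\dots,\alpha_l)$ of positive integers with sum $n$; $\mathcal{P}(n)$ is the set of partitions of $n$, and $\alpha_i=0$ for $i>l$. The diagonal sequence is $\delta(\alpha)=(d_k)_{k\ge1}$ with $d_k=|\{i:1\le i\le k,\ \alpha_i+i-1\ge k\}|$, trailing zeros omitted. $j^{(s)}$ denotes $s$ consecutive entries equal to $j$. The conjugate $\beta^*$ of a partition $\beta$ has parts $\beta^*_j=|\{i:\beta_i\ge j\}|$. *)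

theory Defs
  imports "HOL-Library.Multiset"
begin

definition is_partition :: "nat \<Rightarrow> nat list \<Rightarrow> bool" where
  "is_partition n a \<longleftrightarrow> sorted_wrt (\<ge>) a \<and> (\<forall>x\<in>set a. 0 < x) \<and> sum_list a = n"

text \<open>1-indexed part, with a_i = 0 for i > length.\<close>
definition part :: "nat list \<Rightarrow> nat \<Rightarrow> nat" where
  "part a i = (if 1 \<le> i \<and> i \<le> length a then a ! (i - 1) else 0)"

definition diag :: "nat list \<Rightarrow> nat \<Rightarrow> nat" where
  "diag a k = card {i. 1 \<le> i \<and> i \<le> k \<and> part a i + i - 1 \<ge> k}"

text \<open>Diagonal sequence (d_1, d_2, ...) with trailing zeros omitted; d_k = 0 for
  k > sum a + length a, so the bound is harmless.\<close>
definition delta :: "nat list \<Rightarrow> nat list" where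
  "delta a = rev (dropWhile (\<lambda>x. x = 0)
     (rev (map (diag a) [1..<sum_list a + length a + 1])))"

definition conjugate :: "nat list \<Rightarrow> nat list" where
  "conjugate b = map (\<lambda>j. card {i. 1 \<le> i \<and> i \<le> length b \<and> part b i \<ge> j}) [1..<part b 1 + 1]"

end

theory Submission
  imports Defs
begin

lemma card_downclosed_ge:
  assumes dc: "\<And>i j. 1 \<le> i \<Longrightarrow> i \<le> j \<Longrightarrow> P j \<Longrightarrow> P i" and r: "1 \<le> r"
  shows "r \<le> card {i. 1 \<le> i \<and> i \<le> q \<and> P i} \<longleftrightarrow> r \<le> q \<and> P r"
proof
  assume h: "r \<le> q \<and> P r"
  have "{1..r} \<subseteq> {i. 1 \<le> i \<and> i \<le> q \<and> P i}" using h dc by auto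
  moreover have "finite {i. 1 \<le> i \<and> i \<le> q \<and> P i}" by (rule finite_subset[of _ "{1..q}"]) auto
  ultimately have "card {1..r} \<le> card {i. 1 \<le> i \<and> i \<le> q \<and> P i}" by (rule card_mono[rotated])
  then show "r \<le> card {i. 1 \<le> i \<and> i \<le> q \<and> P i}" by simp
next
  assume h: "r \<le> card {i. 1 \<le> i \<and> i \<le> q \<and> P i}"
  show "r \<le> q \<and> P r"
  proof (rule ccontr)
    assume n: "\<not> (r \<le> q \<and> P r)"
    have "{i. 1 \<le> i \<and> i \<le> q \<and> P i} \<subseteq> {1..<r}"
    proof
      fix i assume "i \<in> {i. 1 \<le> i \<and> i \<le> q \<and> P i}"
      then have i: "1 \<le> i" "i \<le> q" "P i" by auto
      show "i \<in> {1..<r}"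
      proof (rule ccontr)
        assume "i \<notin> {1..<r}"
        then have "r \<le> i" using i by auto
        then show False using n i dc[of r i] r by auto
      qed
    qed
    then have "card {i. 1 \<le> i \<and> i \<le> q \<and> P i} \<le> card {1..<r}" by (rule card_mono[rotated]) auto
    then show False using h r by simp
  qed
qed

lemma mset_eq_thresholds:
  fixes xs ys :: "nat list"
  assumes "0 \<notin> set xs" "0 \<notin> set ys"
    and "\<And>v. 1 \<le> v \<Longrightarrow> length (filter (\<lambda>x. v \<le> x) xs) = length (filter (\<lambda>x. v \<le> x) ys)"
  shows "mset xs = mset ys"
proof (rule multiset_eqI)
  fix x
  have split: "length (filter (\<lambda>y. v \<le> y) zs) = count (mset zs) v + length (filter (\<lambda>y. Suc v \<le> y) zs)"
    for zs :: "nat list" and v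
    by (induction zs) auto
  show "count (mset xs) x = count (mset ys) x"
  proof (cases "x = 0")
    case True then show ?thesis using assms(1,2) by (metis count_mset_0_iff)
  next
    case False
    then have "1 \<le> x" "1 \<le> Suc x" by auto
    then show ?thesis using split[of x xs] split[of x ys] assms(3)[of x] assms(3)[of "Suc x"] by simp
  qed
qed

lemma delta_eq_map:
  assumes pos: "\<And>k. 1 \<le> k \<Longrightarrow> k \<le> m \<Longrightarrow> diag a k > 0"
    and zero: "\<And>k. m < k \<Longrightarrow> diag a k = 0"
    and bound: "m \<le> sum_list a + length a"
  shows "delta a = map (diag a) [1..<m+1]"
proof -
  define N where "N = sum_list a + length a"
  have up: "[1..<N+1] = [1..<m+1] @ [m+1..<N+1]"
  proof -
    have "N + 1 = (m + 1) + (N - m)" using bound N_def by simp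
    then show ?thesis using upt_add_eq_append[of 1 "m+1" "N-m"] by simp
  qed
  have z: "\<forall>x\<in>set (rev (map (diag a) [m+1..<N+1])). x = 0" using zero by auto
  have dw: "dropWhile (\<lambda>x. x = 0) (rev (map (diag a) [1..<m+1])) = rev (map (diag a) [1..<m+1])"
  proof (cases m)
    case 0 then show ?thesis by simp
  next
    case (Suc m')
    have "[1..<m+1] = [1..<m+1-1] @ [m]" using Suc by simp
    then have "rev (map (diag a) [1..<m+1]) = diag a m # rev (map (diag a) [1..<m])" by simp
    moreover have "diag a m > 0" using pos[of m] Suc by simp
    ultimately show ?thesis by simp
  qed
  show ?thesis unfolding delta_def N_def[symmetric] up
    using z dw by (simp add: dropWhile_append)
qed

theorem corollary2p6:
  fixes n q :: nat and s :: "nat \<Rightarrow> nat" and \<alpha> :: "nat list"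
  assumes "is_partition n \<alpha>"
    and "q \<ge> 1"
    and "delta \<alpha> = [1..<q+1] @ concat (map (\<lambda>j. replicate (s j) j) (rev [1..<q+1]))"
  defines "\<alpha>bar \<equiv> map (\<lambda>i. q - i + 1 + (\<Sum>k=i..q. s k)) [1..<q+1]"
  defines "\<alpha>under \<equiv> conjugate \<alpha>bar"
  shows "delta \<alpha>bar = delta \<alpha>under
    \<and> mset (filter (\<lambda>x. x \<noteq> 0) (delta \<alpha>bar)) = mset \<alpha>under"
proof -
  define S where "S i = (\<Sum>k=i..q. s k)" for i
  define b where "b i = (if 1 \<le> i \<and> i \<le> q then q - i + 1 + S i else 0)" for i
  define m where "m = q + S 1"
  define cu where "cu j = card {i. 1 \<le> i \<and> i \<le> q \<and> j \<le> b i}" for j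
  have Smono: "S j \<le> S i" if "i \<le> j" for i j
    unfolding S_def using that by (intro sum_mono2) auto
  have lenbar: "length \<alpha>bar = q" unfolding \<alpha>bar_def by simp
  have pbar: "part \<alpha>bar i = b i" for i
    unfolding part_def b_def lenbar unfolding \<alpha>bar_def S_def
    by (auto simp del: upt_Suc simp: nth_map)
  have b1: "b 1 = m" using assms(2) unfolding b_def m_def by simp
  have bm: "b i \<le> m" for i
    unfolding b_def m_def using Smono[of 1 i] by auto
  have under: "\<alpha>under = map cu [1..<m+1]"
    unfolding \<alpha>under_def conjugate_def lenbar pbar b1 cu_def by simp
  have punder: "part \<alpha>under j = (if 1 \<le> j \<and> j \<le> m then cu j else 0)" for j
    unfolding part_def under by (auto simp del: upt_Suc simp: nth_map)
  have bdc: "j \<le> b i" if "1 \<le> i" "i \<le> i'" "j \<le> b i'" for i i' j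
  proof (cases "j = 0")
    case True then show ?thesis by simp
  next
    case False
    have "i' \<le> q" "1 \<le> i'" using that False unfolding b_def by (auto split: if_splits)
    then show ?thesis using that Smono[of i i'] unfolding b_def by auto
  qed
  have cuG: "r \<le> cu j \<longleftrightarrow> j \<le> b r" if "1 \<le> r" "1 \<le> j" for r j
    unfolding cu_def
    using card_downclosed_ge[where P="\<lambda>i. j \<le> b i" and r=r and q=q] that bdc
    by (auto simp: b_def)
  have diagbar: "diag \<alpha>bar k = card {i. 1 \<le> i \<and> i \<le> k \<and> k + 1 - i \<le> b i}" for k
    unfolding diag_def pbar by (intro arg_cong[where f=card]) auto
  have diagunder: "diag \<alpha>under k = card {j. 1 \<le> j \<and> j \<le> k \<and> j \<le> b (k + 1 - j)}" for k
  proof -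
    have "{j. 1 \<le> j \<and> j \<le> k \<and> part \<alpha>under j + j - 1 \<ge> k}
        = {j. 1 \<le> j \<and> j \<le> k \<and> j \<le> b (k + 1 - j)}"
    proof (intro Collect_cong conj_cong refl)
      fix j assume j: "1 \<le> j" "j \<le> k"
      have "part \<alpha>under j + j - 1 \<ge> k \<longleftrightarrow> k + 1 - j \<le> part \<alpha>under j" using j by auto
      also have "\<dots> \<longleftrightarrow> j \<le> b (k + 1 - j)"
      proof (cases "j \<le> m")
        case True then show ?thesis using punder[of j] cuG[of "k+1-j" j] j by simp
      next
        case False then show ?thesis using punder[of j] bm[of "k+1-j"] j by simp
      qed
      finally show "part \<alpha>under j + j - 1 \<ge> k \<longleftrightarrow> j \<le> b (k + 1 - j)" .
    qed
    then show ?thesis unfolding diag_def by simp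
  qed
  have diageq: "diag \<alpha>bar k = diag \<alpha>under k" for k
  proof -
    have "bij_betw (\<lambda>i. k + 1 - i) {i. 1 \<le> i \<and> i \<le> k \<and> k + 1 - i \<le> b i}
        {j. 1 \<le> j \<and> j \<le> k \<and> j \<le> b (k + 1 - j)}"
    proof (rule bij_betw_byWitness[where f'="\<lambda>i. k + 1 - i"])
    qed (auto simp: image_def intro!: exI[where x="k + 1 - _"])
    then show ?thesis unfolding diagbar diagunder by (rule bij_betw_same_card)
  qed
  have dpos: "diag \<alpha>bar k > 0" if "1 \<le> k" "k \<le> m" for k
  proof -
    have "1 \<in> {i. 1 \<le> i \<and> i \<le> k \<and> k + 1 - i \<le> b i}" using that b1 by auto
    moreover have "finite {i. 1 \<le> i \<and> i \<le> k \<and> k + 1 - i \<le> b i}" by (rule finite_subset[of _ "{1..k}"]) auto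
    ultimately show ?thesis unfolding diagbar by (auto simp: card_gt_0_iff)
  qed
  have dzero: "diag \<alpha>bar k = 0" if "m < k" for k
  proof -
    have "{i. 1 \<le> i \<and> i \<le> k \<and> k + 1 - i \<le> b i} = {}"
    proof (safe)
      fix i assume i: "1 \<le> i" "i \<le> k" "k + 1 - i \<le> b i"
      show "i \<in> {}"
      proof (cases "i \<le> q")
        case True then have "b i = q - i + 1 + S i" using i unfolding b_def by simp
        then show ?thesis using i True that Smono[of 1 i] unfolding m_def by simp
      next
        case False then show ?thesis using i unfolding b_def by simp
      qed
    qed
    then show ?thesis unfolding diagbar by simp
  qed
  have bound1: "m \<le> sum_list \<alpha>bar + length \<alpha>bar"
  proof -
    have "\<alpha>bar ! 0 = m" using pbar[of 1] b1 assms(2) lenbar unfolding part_def by simp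
    moreover have "\<alpha>bar ! 0 \<le> sum_list \<alpha>bar" using lenbar assms(2)
      by (intro member_le_sum_list nth_mem) simp_all
    ultimately show ?thesis by simp
  qed
  have bound2: "m \<le> sum_list \<alpha>under + length \<alpha>under" unfolding under by simp
  have D1: "delta \<alpha>bar = map (diag \<alpha>bar) [1..<m+1]"
    by (rule delta_eq_map) (use dpos dzero bound1 in auto)
  have D2: "delta \<alpha>under = map (diag \<alpha>bar) [1..<m+1]"
    using delta_eq_map[of m \<alpha>under] dpos dzero bound2 diageq by simp
  have filt: "filter (\<lambda>x. x \<noteq> 0) (delta \<alpha>bar) = map (diag \<alpha>bar) [1..<m+1]"
    unfolding D1 using dpos by (auto intro!: filter_True)
  have lenfilt: "length (filter P (map f [1..<m+1])) = card {j. 1 \<le> j \<and> j \<le> m \<and> P (f j)}"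
    for P f
  proof -
    have "length (filter P (map f [1..<m+1])) = length (filter (P \<circ> f) [1..<m+1])"
      by (simp add: filter_map)
    also have "\<dots> = card (set (filter (P \<circ> f) [1..<m+1]))"
      by (rule distinct_card[symmetric]) simp
    also have "set (filter (P \<circ> f) [1..<m+1]) = {j. 1 \<le> j \<and> j \<le> m \<and> P (f j)}" by auto
    finally show ?thesis .
  qed
  have cnt_under: "length (filter (\<lambda>x. v \<le> x) \<alpha>under) = b v" if "1 \<le> v" for v
  proof -
    have "{j. 1 \<le> j \<and> j \<le> m \<and> v \<le> cu j} = {1..b v}"
    proof -
      have e: "\<And>j. 1 \<le> j \<Longrightarrow> v \<le> cu j \<longleftrightarrow> j \<le> b v" using cuG that by blast
      show ?thesis using e bm[of v] by (auto simp del: One_nat_def)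
    qed
    then show ?thesis unfolding under lenfilt by simp
  qed
  have dchar: "v \<le> diag \<alpha>bar k \<longleftrightarrow> (k \<le> q \<and> v \<le> k) \<or> (q < k \<and> k \<le> q + S v \<and> v \<le> q)"
    if "1 \<le> v" "1 \<le> k" "k \<le> m" for v k
  proof (cases "k \<le> q")
    case True
    have "{i. 1 \<le> i \<and> i \<le> k \<and> k + 1 - i \<le> b i} = {1..k}"
      using True unfolding b_def by auto
    then show ?thesis unfolding diagbar using True by simp
  next
    case False
    have "{i. 1 \<le> i \<and> i \<le> k \<and> k + 1 - i \<le> b i} = {i. 1 \<le> i \<and> i \<le> q \<and> k - q \<le> S i}"
      using False unfolding b_def by auto
    moreover have "v \<le> card {i. 1 \<le> i \<and> i \<le> q \<and> k - q \<le> S i} \<longleftrightarrow> v \<le> q \<and> k - q \<le> S v"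
    proof (rule card_downclosed_ge[where P="\<lambda>i. k - q \<le> S i" and r=v and q=q])
      show "1 \<le> v" by (rule that(1))
      fix i j assume "1 \<le> i" "i \<le> j" "k - q \<le> S j"
      then show "k - q \<le> S i" using Smono[of i j] by linarith
    qed
    ultimately have "v \<le> diag \<alpha>bar k \<longleftrightarrow> v \<le> q \<and> k - q \<le> S v"
      unfolding diagbar by simp
    then show ?thesis using False by linarith
  qed
  have cnt_bar: "length (filter (\<lambda>x. v \<le> x) (map (diag \<alpha>bar) [1..<m+1])) = b v" if "1 \<le> v" for v
  proof (cases "v \<le> q")
    case True
    have "{j. 1 \<le> j \<and> j \<le> m \<and> v \<le> diag \<alpha>bar j} = {v..q + S v}"
      using dchar[OF that] True that Smono[of 1 v] unfolding m_def by auto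
    then show ?thesis unfolding lenfilt using True that unfolding b_def by simp
  next
    case False
    have "{j. 1 \<le> j \<and> j \<le> m \<and> v \<le> diag \<alpha>bar j} = {}"
      using dchar[OF that] False by auto
    then show ?thesis unfolding lenfilt using False unfolding b_def by simp
  qed
  have M: "mset (map (diag \<alpha>bar) [1..<m+1]) = mset \<alpha>under"
  proof (rule mset_eq_thresholds)
    show "0 \<notin> set (map (diag \<alpha>bar) [1..<m + 1])"
    proof
      assume "0 \<in> set (map (diag \<alpha>bar) [1..<m + 1])"
      then obtain k where "1 \<le> k" "k \<le> m" "diag \<alpha>bar k = 0" by auto
      then show False using dpos[of k] by simp
    qed
    show "0 \<notin> set \<alpha>under"
    proof
      assume "0 \<in> set \<alpha>under"
      then obtain j where "1 \<le> j" "j \<le> m" "cu j = 0" unfolding under by auto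
      then show False using cuG[of 1 j] b1 by simp
    qed
  next
    fix v :: nat assume "1 \<le> v"
    then show "length (filter (\<lambda>x. v \<le> x) (map (diag \<alpha>bar) [1..<m + 1]))
      = length (filter (\<lambda>x. v \<le> x) \<alpha>under)"
      using cnt_under[of v] cnt_bar[of v] by (simp only:)
  qed
  show ?thesis using D1 D2 filt M by simp
qed

end
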